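(* Let $m$ be a positive integer and $q(x,y)=x^2-xy+y^2$. If the equation $m=q(x,y)$ has a solution $(x,y)\in\mathbb{Z}^2$, then it has a solution $(x',y')$ with $x',y'$ positive integers. *)

theory Defs
  imports Main
begin

definition q :: "int \<Rightarrow> int \<Rightarrow> int" where
  "q x y = x^2 - x*y + y^2"

end

theory Submission
  imports Defs
begin

theorem mainTheorem7:
  fixes m :: int
  assumes "m > 0"
    and "\<exists>x y :: int. m = q x y"
  shows "\<exists>x' y' :: int. x' > 0 \<and> y' > 0 \<and> m = q x' y'"
proof -
  obtain x y :: int where m: "m = q x y" using assms(2) by blast
  have nz: "\<not> (x = 0 \<and> y = 0)" using assms(1) m by (auto simp: q_def)
  consider "x > 0" "y > 0" | "x < 0" "y < 0" | "x > 0" "y < 0" | "x < 0" "y > 0"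
    | "x = 0" | "y = 0" by linarith
  then show ?thesis
  proof cases
    case 1 then show ?thesis using m by blast
  next
    case 2 then show ?thesis using m by (intro exI[of _ "-x"] exI[of _ "-y"]) (simp add: q_def)
  next
    case 3 then show ?thesis using m
      by (intro exI[of _ "x"] exI[of _ "x-y"]) (simp add: q_def power2_eq_square algebra_simps)
  next
    case 4 then show ?thesis using m
      by (intro exI[of _ "y"] exI[of _ "y-x"]) (simp add: q_def power2_eq_square algebra_simps)
  next
    case 5 then show ?thesis using m nz
      by (intro exI[of _ "\<bar>y\<bar>"] exI[of _ "\<bar>y\<bar>"]) (auto simp: q_def power2_eq_square)
  next
    case 6 then show ?thesis using m nz
      by (intro exI[of _ "\<bar>x\<bar>"] exI[of _ "\<bar>x\<bar>"]) (auto simp: q_def power2_eq_square)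
  qed
qed

end
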